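(* There exists a constant $C_1>0$ such that $$\mathcal J(v)\ge C_1\|v\|_{W_2^1(\mathcal T)}^2\qquad\text{for all } v\in\mathcal W.$$
   Context: Tree setup. Let $\mathcal T$ be a compact rooted tree with edges $e_j=[v_{k_j},v_j]$, $j=1,\dots,m$. Here $k_1=0$, $k_j\in\{1,\dots,d\}$ for $j\ge2$, and iterating $k$ from any $j$ reaches $0$. The root is $v_0$, internal vertices are $v_1,\dots,v_d$, and boundary vertices are $v_{d+1},\dots,v_m$. Edge $e_j$ has length $T_j$ and is parametrized by $[0,T_j]$ from $v_{k_j}$ to $v_j$. Fix $\tau\ge0$ with $\tau<T_j$ for all $j$. Spaces. Set $W_2^1(\mathcal T_\tau):=W_2^1[-\tau,T_1]\oplus\bigoplus_{j\ge2}W_2^1[0,T_j]$ and $W_2^1(\mathcal T):=\bigoplus_jW_2^1[0,T_j]$. $\mathcal W$ is the subspace of $W_2^1(\mathcal T_\tau)$ of all real tuples $v$ satisfying: - $v_j(0)=v_{k_j}(T_{k_j})$ for $j\ge2$; - $v_j=0$ on $[T_j-\tau,T_j]$ for $j>d$; - $v_1=0$ on $[-\tau,0]$. It is regarded as a subspace of $W_2^1(\mathcal T)$ by restriction. Operators. Fix real $b_j,c_j$. Define $$\ell_jv(t)=v_j'(t)+b_jv_j(t)+c_jv_j(t-\tau),\qquad 0<t<T_j,$$ where for $j\ge2$ and $0<t<\tau$ the term $v_j(t-\tau)$ means $v_{k_j}(t-\tau+T_{k_j})$, and for $j=1$ it uses $v_1$ on $[-\tau,0]$. Set $$\mathcal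 J(v)=\sum_{j=1}^m\int_0^{T_j}(\ell_jv(t))^2\,dt.$$ *)

theory Defs
  imports "HOL-Analysis.Analysis"
begin

text \<open>Sobolev space W_2^1[a,b] in one dimension: f is (the absolutely continuous
  representative of) a W_2^1 function on [a,b] whose derivative is g, i.e.
  g is square integrable on [a,b] and f is the indefinite integral of g.\<close>
definition W21 :: "(real \<Rightarrow> real) \<Rightarrow> (real \<Rightarrow> real) \<Rightarrow> real \<Rightarrow> real \<Rightarrow> bool" where
  "W21 f g a b \<longleftrightarrow> a \<le> b \<and> g integrable_on {a..b} \<and> (\<lambda>x. (g x)\<^sup>2) integrable_on {a..b}
     \<and> (\<forall>x\<in>{a..b}. f x = f a + integral {a..x} g)"

text \<open>Rooted tree: edges 1..m, edge j = [v (k j), v j], internal vertices 1..d,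
  boundary vertices d+1..m, root 0.\<close>
definition rooted_tree :: "nat \<Rightarrow> nat \<Rightarrow> (nat \<Rightarrow> nat) \<Rightarrow> bool" where
  "rooted_tree m d k \<longleftrightarrow> 1 \<le> m \<and> d < m \<and> k 1 = 0
     \<and> (\<forall>j\<in>{2..m}. k j \<in> {1..d})
     \<and> (\<forall>j\<in>{1..m}. \<exists>n. (k ^^ n) j = 0)
     \<and> (\<forall>i\<in>{1..d}. \<exists>j\<in>{2..m}. k j = i)"

definition inW :: "nat \<Rightarrow> nat \<Rightarrow> (nat \<Rightarrow> nat) \<Rightarrow> (nat \<Rightarrow> real) \<Rightarrow> real
     \<Rightarrow> (nat \<Rightarrow> real \<Rightarrow> real) \<Rightarrow> (nat \<Rightarrow> real \<Rightarrow> real) \<Rightarrow> bool" where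
  "inW m d k T \<tau> v g \<longleftrightarrow>
     W21 (v 1) (g 1) (-\<tau>) (T 1)
     \<and> (\<forall>j\<in>{2..m}. W21 (v j) (g j) 0 (T j))
     \<and> (\<forall>j\<in>{2..m}. v j 0 = v (k j) (T (k j)))
     \<and> (\<forall>j\<in>{d+1..m}. \<forall>t\<in>{T j - \<tau>..T j}. v j t = 0)
     \<and> (\<forall>t\<in>{-\<tau>..0}. v 1 t = 0)"

definition delayed :: "(nat \<Rightarrow> nat) \<Rightarrow> (nat \<Rightarrow> real) \<Rightarrow> real
     \<Rightarrow> (nat \<Rightarrow> real \<Rightarrow> real) \<Rightarrow> nat \<Rightarrow> real \<Rightarrow> real" where
  "delayed k T \<tau> v j t =
     (if \<tau> \<le> t \<or> j = 1 then v j (t - \<tau>) else v (k j) (t - \<tau> + T (k j)))"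

definition ell :: "(nat \<Rightarrow> nat) \<Rightarrow> (nat \<Rightarrow> real) \<Rightarrow> real \<Rightarrow> (nat \<Rightarrow> real) \<Rightarrow> (nat \<Rightarrow> real)
     \<Rightarrow> (nat \<Rightarrow> real \<Rightarrow> real) \<Rightarrow> (nat \<Rightarrow> real \<Rightarrow> real) \<Rightarrow> nat \<Rightarrow> real \<Rightarrow> real" where
  "ell k T \<tau> b c v g j t = g j t + b j * v j t + c j * delayed k T \<tau> v j t"

definition JJ :: "nat \<Rightarrow> (nat \<Rightarrow> nat) \<Rightarrow> (nat \<Rightarrow> real) \<Rightarrow> real \<Rightarrow> (nat \<Rightarrow> real) \<Rightarrow> (nat \<Rightarrow> real)
     \<Rightarrow> (nat \<Rightarrow> real \<Rightarrow> real) \<Rightarrow> (nat \<Rightarrow> real \<Rightarrow> real) \<Rightarrow> real" where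
  "JJ m k T \<tau> b c v g = (\<Sum>j=1..m. integral {0..T j} (\<lambda>t. (ell k T \<tau> b c v g j t)\<^sup>2))"

definition W21T_norm2 :: "nat \<Rightarrow> (nat \<Rightarrow> real) \<Rightarrow> (nat \<Rightarrow> real \<Rightarrow> real) \<Rightarrow> (nat \<Rightarrow> real \<Rightarrow> real) \<Rightarrow> real" where
  "W21T_norm2 m T v g = (\<Sum>j=1..m. integral {0..T j} (\<lambda>t. (v j t)\<^sup>2 + (g j t)\<^sup>2))"

end

theory Submission
  imports Defs
begin


lemma integral_sq_nonneg: "0 \<le> integral {a..b::real} (\<lambda>x. (f x)\<^sup>2 :: real)"
  by (cases "(\<lambda>x. (f x)\<^sup>2) integrable_on {a..b}") (auto intro: integral_nonneg simp: not_integrable_integral)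

lemma cauchy_schwarz_int:
  fixes f :: "real \<Rightarrow> real"
  assumes f2: "(\<lambda>x. (f x)\<^sup>2) integrable_on {a..b}" and fa: "(\<lambda>x. \<bar>f x\<bar>) integrable_on {a..b}"
    and ab: "a \<le> b"
  shows "integral {a..b} (\<lambda>x. \<bar>f x\<bar>) \<le> sqrt (b - a) * sqrt (integral {a..b} (\<lambda>x. (f x)\<^sup>2))"
proof -
  define I where "I = integral {a..b} (\<lambda>x. \<bar>f x\<bar>)"
  define F where "F = integral {a..b} (\<lambda>x. (f x)\<^sup>2)"
  have I0: "0 \<le> I" unfolding I_def by (rule integral_nonneg[OF fa]) auto
  show ?thesis
  proof (cases "a = b")
    case True then show ?thesis by simp
  next
    case False
    then have ba: "b - a > 0" using ab by simp
    define \<alpha> where "\<alpha> = I / (b - a)"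
    have eq: "(\<lambda>x. (\<bar>f x\<bar> - \<alpha>)\<^sup>2) = (\<lambda>x. ((f x)\<^sup>2 - 2 * \<alpha> * \<bar>f x\<bar>) + \<alpha>\<^sup>2)"
      by (rule ext) (simp add: power2_eq_square algebra_simps)
    have int1: "(\<lambda>x. (f x)\<^sup>2 - 2 * \<alpha> * \<bar>f x\<bar>) integrable_on {a..b}"
      using f2 fa by (intro integrable_diff integrable_on_mult_right) auto
    have "integral {a..b} (\<lambda>x. (\<bar>f x\<bar> - \<alpha>)\<^sup>2) = F - 2 * \<alpha> * I + (b - a) * \<alpha>\<^sup>2"
    proof -
      have "integral {a..b} (\<lambda>x. ((f x)\<^sup>2 - 2 * \<alpha> * \<bar>f x\<bar>) + \<alpha>\<^sup>2)
          = integral {a..b} (\<lambda>x. (f x)\<^sup>2 - 2 * \<alpha> * \<bar>f x\<bar>) + integral {a..b} (\<lambda>x. \<alpha>\<^sup>2)"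
        by (rule integral_add[OF int1 integrable_const_ivl])
      moreover have "integral {a..b} (\<lambda>x. (f x)\<^sup>2 - 2 * \<alpha> * \<bar>f x\<bar>) = F - integral {a..b} (\<lambda>x. 2 * \<alpha> * \<bar>f x\<bar>)"
        unfolding F_def by (rule integral_diff[OF f2 integrable_on_mult_right[OF fa]])
      moreover have "integral {a..b} (\<lambda>x. 2 * \<alpha> * \<bar>f x\<bar>) = 2 * \<alpha> * I"
        unfolding I_def by (rule integral_mult_right)
      ultimately show ?thesis unfolding eq using ab by (simp add: content_real)
    qed
    also have "\<dots> = F - I\<^sup>2 / (b - a)"
    proof -
      have h1: "(b - a) * \<alpha>\<^sup>2 = \<alpha> * I" using ba by (simp add: \<alpha>_def power2_eq_square)
      have h2: "\<alpha> * I = I\<^sup>2 / (b - a)" by (simp add: \<alpha>_def power2_eq_square)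
      show ?thesis using h1 h2 by simp
    qed
    finally have "0 \<le> F - I\<^sup>2 / (b - a)" using integral_sq_nonneg[of a b "\<lambda>x. \<bar>f x\<bar> - \<alpha>"] by simp
    then have "I\<^sup>2 \<le> (b - a) * F" using ba by (simp add: field_simps)
    then have "sqrt (I\<^sup>2) \<le> sqrt ((b - a) * F)" by (rule real_sqrt_le_mono)
    moreover have "sqrt (I\<^sup>2) = I" using I0 by simp
    moreover have "sqrt ((b - a) * F) = sqrt (b - a) * sqrt F" by (rule real_sqrt_mult)
    ultimately have "I \<le> sqrt (b - a) * sqrt F" by simp
    then show ?thesis unfolding I_def F_def .
  qed
qed

lemma gronwall:
  fixes \<phi> :: "real \<Rightarrow> real"
  assumes cont: "continuous_on {0..T} \<phi>" and L: "0 \<le> L"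
    and ineq: "\<forall>t\<in>{0..T}. \<phi> t \<le> A + L * integral {0..t} \<phi>" and t: "t \<in> {0..T}"
  shows "\<phi> t \<le> A * exp (L * t)"
proof -
  define \<Phi> where "\<Phi> s = A + L * integral {0..s} \<phi>" for s
  define \<psi> where "\<psi> s = exp (- L * s) * \<Phi> s" for s
  have intc: "continuous_on {0..T} (\<lambda>s. integral {0..s} \<phi>)"
    by (rule indefinite_integral_continuous_1[OF integrable_continuous_real[OF cont]])
  have intc': "continuous_on {0..t} (\<lambda>s. integral {0..s} \<phi>)"
    by (rule continuous_on_subset[OF intc]) (use t in auto)
  have cpsi: "continuous_on {0..t} \<psi>"
    unfolding \<psi>_def \<Phi>_def
    by (intro continuous_intros intc')
  have der: "\<exists>y. (\<psi> has_real_derivative y) (at x) \<and> y \<le> 0" if x: "0 < x" "x < t" for x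
  proof -
    have "((\<lambda>u. integral {0..u} \<phi>) has_vector_derivative \<phi> x) (at x within {0..T})"
      by (rule integral_has_vector_derivative[OF cont]) (use x t in auto)
    then have d: "((\<lambda>u. integral {0..u} \<phi>) has_real_derivative \<phi> x) (at x)"
      using x t by (simp add: has_real_derivative_iff_has_vector_derivative at_within_Icc_at)
    have e: "((\<lambda>s. exp (- L * s)) has_real_derivative exp (- L * x) * (- L)) (at x)"
      using DERIV_exp[THEN DERIV_chain2, OF DERIV_cmult[OF DERIV_ident, of "- L" x]] by simp
    have p: "(\<Phi> has_real_derivative (L * \<phi> x)) (at x)"
      unfolding \<Phi>_def using DERIV_add[OF DERIV_const DERIV_cmult[OF d, of L], of A] by simp
    have "(\<psi> has_real_derivative (exp (- L * x) * (- L) * \<Phi> x + exp (- L * x) * (L * \<phi> x))) (at x)"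
      unfolding \<psi>_def using DERIV_mult[OF e p] by (simp add: algebra_simps)
    moreover have "exp (- L * x) * (- L) * \<Phi> x + exp (- L * x) * (L * \<phi> x) \<le> 0"
    proof -
      have "\<phi> x \<le> \<Phi> x" using ineq x t unfolding \<Phi>_def by auto
      then have "L * \<phi> x \<le> L * \<Phi> x" using L by (rule mult_left_mono)
      then have "exp (- L * x) * (L * \<phi> x) \<le> exp (- L * x) * (L * \<Phi> x)" by simp
      then show ?thesis by (simp add: algebra_simps)
    qed
    ultimately show ?thesis by blast
  qed
  have "\<psi> t \<le> \<psi> 0"
    by (rule DERIV_nonpos_imp_decreasing_open[OF _ der cpsi]) (use t in simp)
  then have "exp (- L * t) * \<Phi> t \<le> A" by (simp add: \<psi>_def \<Phi>_def)
  then have "\<Phi> t \<le> A * exp (L * t)"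
    by (simp add: exp_minus field_simps)
  moreover have "\<phi> t \<le> \<Phi> t" using ineq t unfolding \<Phi>_def by auto
  ultimately show ?thesis by simp
qed

lemma Icc_leb: "{a..b::real} \<in> sets lebesgue"
  by (rule fmeasurableD[OF lmeasurable_interval(1)])

lemma Ico_leb: "{a..<b::real} \<in> sets lebesgue"
  by (intro sets_completionI_sets) simp

lemma sum_sq_le: "((x::real) + y)\<^sup>2 \<le> 2*x\<^sup>2 + 2*y\<^sup>2"
proof -
  have "0 \<le> (x - y)\<^sup>2" by simp
  then show ?thesis unfolding power2_diff power2_sum by linarith
qed

lemma abs_le_1_sq: "\<bar>x::real\<bar> \<le> 1 + x\<^sup>2"
proof (cases "\<bar>x\<bar> \<le> 1")
  case True then show ?thesis by (smt (verit) zero_le_power2)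
next
  case False
  then have "\<bar>x\<bar> * 1 \<le> \<bar>x\<bar> * \<bar>x\<bar>" by (intro mult_left_mono) auto
  then show ?thesis by (simp add: power2_eq_square)
qed

lemma W21_cont: assumes "W21 f g a b" shows "continuous_on {a..b} f"
proof -
  have "continuous_on {a..b} (\<lambda>x. integral {a..x} g)"
    by (rule indefinite_integral_continuous_1) (use assms in \<open>simp add: W21_def\<close>)
  then have "continuous_on {a..b} (\<lambda>x. f a + integral {a..x} g)"
    by (rule continuous_on_add[OF continuous_on_const])
  then show ?thesis
  proof (rule continuous_on_eq)
    fix x assume "x \<in> {a..b}"
    then have "f x = f a + integral {a..x} g" using assms unfolding W21_def by blast
    then show "f a + integral {a..x} g = f x" by simp
  qed
qed

lemma sq_integrable:
  fixes g h :: "real \<Rightarrow> real"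
  assumes g: "g integrable_on {a..b}" "(\<lambda>x. (g x)\<^sup>2) integrable_on {a..b}"
    and h: "h \<in> borel_measurable (lebesgue_on {a..b})" "\<forall>x\<in>{a..b}. \<bar>h x\<bar> \<le> B"
  shows "(\<lambda>x. (g x + h x)\<^sup>2) integrable_on {a..b}"
    "(\<lambda>x. \<bar>g x + h x\<bar>) integrable_on {a..b}"
    "(\<lambda>x. g x + h x) integrable_on {a..b}"
proof -
  have gm: "g \<in> borel_measurable (lebesgue_on {a..b})" using g(1) by (rule integrable_imp_measurable)
  have B: "(\<lambda>x. 2 * (g x)\<^sup>2 + 2 * B\<^sup>2) integrable_on {a..b}"
    using g(2) by (intro integrable_add integrable_on_mult_right integrable_const_ivl)
  have B2: "(\<lambda>x. 1 + (g x)\<^sup>2 + \<bar>B\<bar>) integrable_on {a..b}"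
    using g(2) by (intro integrable_add integrable_const_ivl)
  show "(\<lambda>x. (g x + h x)\<^sup>2) integrable_on {a..b}"
  proof (rule measurable_bounded_by_integrable_imp_integrable_real[OF _ B])
    show "(\<lambda>x. (g x + h x)\<^sup>2) \<in> borel_measurable (lebesgue_on {a..b})"
      using gm h(1) by (intro borel_measurable_power borel_measurable_add borel_measurable_abs)
    fix x assume x: "x \<in> {a..b}"
    have "\<bar>h x\<bar> \<le> B" using h x by auto
    hence "\<bar>h x\<bar>\<^sup>2 \<le> B\<^sup>2" by (intro power_mono) auto
    hence "(h x)\<^sup>2 \<le> B\<^sup>2" by simp
    moreover have "(g x + h x)\<^sup>2 \<le> 2*(g x)\<^sup>2 + 2*(h x)\<^sup>2"
      by (rule sum_sq_le)
    ultimately show "\<bar>(g x + h x)\<^sup>2\<bar> \<le> 2 * (g x)\<^sup>2 + 2 * B\<^sup>2" by simp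
  qed (simp_all add: Icc_leb)
  show "(\<lambda>x. \<bar>g x + h x\<bar>) integrable_on {a..b}"
  proof (rule measurable_bounded_by_integrable_imp_integrable_real[OF _ B2])
    show "(\<lambda>x. \<bar>g x + h x\<bar>) \<in> borel_measurable (lebesgue_on {a..b})"
      using gm h(1) by (intro borel_measurable_power borel_measurable_add borel_measurable_abs)
    fix x assume x: "x \<in> {a..b}"
    have "\<bar>h x\<bar> \<le> B" using h x by auto
    moreover have "\<bar>g x\<bar> \<le> 1 + (g x)\<^sup>2" by (rule abs_le_1_sq)
    ultimately show "\<bar>\<bar>g x + h x\<bar>\<bar> \<le> 1 + (g x)\<^sup>2 + \<bar>B\<bar>" by simp
  qed (simp_all add: Icc_leb)
  show "(\<lambda>x. g x + h x) integrable_on {a..b}"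
  proof (rule measurable_bounded_by_integrable_imp_integrable_real[OF _ B2])
    show "(\<lambda>x. g x + h x) \<in> borel_measurable (lebesgue_on {a..b})"
      using gm h(1) by (intro borel_measurable_power borel_measurable_add borel_measurable_abs)
    fix x assume x: "x \<in> {a..b}"
    have "\<bar>h x\<bar> \<le> B" using h x by auto
    moreover have "\<bar>g x\<bar> \<le> 1 + (g x)\<^sup>2" by (rule abs_le_1_sq)
    ultimately show "\<bar>g x + h x\<bar> \<le> 1 + (g x)\<^sup>2 + \<bar>B\<bar>" by simp
  qed (simp_all add: Icc_leb)
qed




lemma three_sq_le: "((x::real) - y - z)\<^sup>2 \<le> 3 * (x\<^sup>2 + y\<^sup>2 + z\<^sup>2)"
proof -
  have "0 \<le> (x + y)\<^sup>2 + (x + z)\<^sup>2 + (y - z)\<^sup>2" by simp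
  moreover have "3 * (x\<^sup>2 + y\<^sup>2 + z\<^sup>2) - (x - y - z)\<^sup>2 = (x + y)\<^sup>2 + (x + z)\<^sup>2 + (y - z)\<^sup>2"
    by algebra
  ultimately show ?thesis by linarith
qed

locale edge =
  fixes u g w q :: "real \<Rightarrow> real" and T \<tau> b c P :: real
  assumes tT: "0 \<le> \<tau>" "\<tau> < T"
    and gi: "g integrable_on {0..T}" and g2: "(\<lambda>t. (g t)\<^sup>2) integrable_on {0..T}"
    and ueq: "\<forall>t\<in>{0..T}. u t = u 0 + integral {0..t} g"
    and qc: "continuous_on {0..\<tau>} q" and qP: "\<forall>t\<in>{0..\<tau>}. \<bar>q t\<bar> \<le> P"
    and w1: "\<forall>t\<in>{0..<\<tau>}. w t = q t" and w2: "\<forall>t\<in>{\<tau>..T}. w t = u (t - \<tau>)"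
begin

definition "f t = g t + b * u t + c * w t"

lemma P0: "0 \<le> P" using qP tT by (metis abs_ge_zero atLeastAtMost_iff order.trans order_refl)

lemma u_cont: "continuous_on {0..T} u"
proof -
  have "continuous_on {0..T} (\<lambda>x. integral {0..x} g)"
    by (rule indefinite_integral_continuous_1[OF gi])
  then have "continuous_on {0..T} (\<lambda>x. u 0 + integral {0..x} g)"
    by (rule continuous_on_add[OF continuous_on_const])
  then show ?thesis
  proof (rule continuous_on_eq)
    fix x assume "x \<in> {0..T}"
    then have "u x = u 0 + integral {0..x} g" using ueq by blast
    then show "u 0 + integral {0..x} g = u x" by simp
  qed
qed

lemma u_bdd: obtains B where "\<forall>t\<in>{0..T}. \<bar>u t\<bar> \<le> B"
proof -
  have "bounded (u ` {0..T})"
    by (rule compact_imp_bounded[OF compact_continuous_image[OF u_cont compact_Icc]])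
  then obtain B where "\<forall>x\<in>u ` {0..T}. norm x \<le> B" unfolding bounded_iff by blast
  then show ?thesis using that by auto
qed

lemma w_meas: "w \<in> borel_measurable (lebesgue_on {0..T})"
proof -
  define W1 where "W1 t = (if t \<in> {0..<\<tau>} then q t else 0)" for t
  define W2 where "W2 t = (if t \<in> {\<tau>..T} then u (t - \<tau>) else 0)" for t
  have c1: "continuous_on {0..<\<tau>} q" by (rule continuous_on_subset[OF qc]) auto
  have "W1 \<in> borel_measurable lebesgue"
    unfolding W1_def
    by (rule borel_measurable_if_I[OF continuous_imp_measurable_on_sets_lebesgue[OF c1 Ico_leb] Ico_leb])
  moreover
  have c2: "continuous_on {\<tau>..T} (\<lambda>t. u (t - \<tau>))"
  proof (rule continuous_on_compose2[OF u_cont])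
    show "continuous_on {\<tau>..T} (\<lambda>t. t - \<tau>)" by (intro continuous_intros)
    show "(\<lambda>t. t - \<tau>) ` {\<tau>..T} \<subseteq> {0..T}" using tT by auto
  qed
  have "W2 \<in> borel_measurable lebesgue"
    unfolding W2_def
    by (rule borel_measurable_if_I[OF continuous_imp_measurable_on_sets_lebesgue[OF c2 Icc_leb] Icc_leb])
  ultimately have "(\<lambda>t. W1 t + W2 t) \<in> borel_measurable lebesgue" by (rule borel_measurable_add)
  then have "(\<lambda>t. W1 t + W2 t) \<in> borel_measurable (lebesgue_on {0..T})"
    by (rule measurable_restrict_space1)
  moreover have "W1 t + W2 t = w t" if "t \<in> {0..T}" for t
    using that w1 w2 by (auto simp: W1_def W2_def)
  ultimately show ?thesis using measurable_lebesgue_cong[of "{0..T}" "\<lambda>t. W1 t + W2 t" w] by simp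
qed


lemma w_bound: "\<forall>t\<in>{0..T}. \<bar>w t\<bar> \<le> P + \<bar>u (max 0 (t - \<tau>))\<bar>"
proof
  fix t assume t: "t \<in> {0..T}"
  show "\<bar>w t\<bar> \<le> P + \<bar>u (max 0 (t - \<tau>))\<bar>"
  proof (cases "t < \<tau>")
    case True
    then have "w t = q t" using w1 t by auto
    moreover have "\<bar>q t\<bar> \<le> P" using qP t True by auto
    ultimately show ?thesis by simp
  next
    case False
    then have "w t = u (t - \<tau>)" using w2 t by auto
    moreover have "max 0 (t - \<tau>) = t - \<tau>" using False by simp
    ultimately show ?thesis using P0 by simp
  qed
qed

lemma w_bound2: assumes "\<forall>t\<in>{0..T}. \<bar>u t\<bar> \<le> M" shows "\<forall>t\<in>{0..T}. \<bar>w t\<bar> \<le> P + M"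
proof
  fix t assume t: "t \<in> {0..T}"
  then have "max 0 (t - \<tau>) \<in> {0..T}" using tT by auto
  then have "\<bar>u (max 0 (t - \<tau>))\<bar> \<le> M" using assms by blast
  then show "\<bar>w t\<bar> \<le> P + M" using w_bound t by force
qed

lemma u_meas: "u \<in> borel_measurable (lebesgue_on {0..T})"
  by (rule continuous_imp_measurable_on_sets_lebesgue[OF u_cont Icc_leb])

lemma f_eq: "f = (\<lambda>t. g t + (b * u t + c * w t))"
  unfolding f_def by (simp add: add.assoc)

lemma f_ints: "(\<lambda>t. (f t)\<^sup>2) integrable_on {0..T}" "(\<lambda>t. \<bar>f t\<bar>) integrable_on {0..T}" "f integrable_on {0..T}"
proof -
  obtain B where B: "\<forall>t\<in>{0..T}. \<bar>u t\<bar> \<le> B" by (rule u_bdd)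
  have wB: "\<forall>t\<in>{0..T}. \<bar>w t\<bar> \<le> P + B" by (rule w_bound2[OF B])
  have hm: "(\<lambda>t. b * u t + c * w t) \<in> borel_measurable (lebesgue_on {0..T})"
    using u_meas w_meas by (intro borel_measurable_add borel_measurable_times borel_measurable_const)
  have hb: "\<forall>t\<in>{0..T}. \<bar>b * u t + c * w t\<bar> \<le> \<bar>b\<bar> * B + \<bar>c\<bar> * (P + B)"
  proof
    fix t assume t: "t \<in> {0..T}"
    have "\<bar>b * u t\<bar> \<le> \<bar>b\<bar> * B" unfolding abs_mult using B t by (intro mult_left_mono) auto
    moreover have "\<bar>c * w t\<bar> \<le> \<bar>c\<bar> * (P + B)" unfolding abs_mult using wB t by (intro mult_left_mono) auto
    ultimately show "\<bar>b * u t + c * w t\<bar> \<le> \<bar>b\<bar> * B + \<bar>c\<bar> * (P + B)" by linarith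
  qed
  note S = sq_integrable[OF gi g2 hm hb]
  show "(\<lambda>t. (f t)\<^sup>2) integrable_on {0..T}" "(\<lambda>t. \<bar>f t\<bar>) integrable_on {0..T}" "f integrable_on {0..T}"
    unfolding f_eq using S by auto
qed

lemma u_ints: "u integrable_on {0..T}" "(\<lambda>t. \<bar>u t\<bar>) integrable_on {0..T}"
  using u_cont by (auto intro!: integrable_continuous_real continuous_intros)

lemma w_ints: "w integrable_on {0..T}" "(\<lambda>t. \<bar>w t\<bar>) integrable_on {0..T}"
proof -
  obtain B where B: "\<forall>t\<in>{0..T}. \<bar>u t\<bar> \<le> B" by (rule u_bdd)
  have wB: "\<forall>t\<in>{0..T}. \<bar>w t\<bar> \<le> P + B" by (rule w_bound2[OF B])
  show "w integrable_on {0..T}"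
    by (rule measurable_bounded_by_integrable_imp_integrable_real[OF w_meas integrable_const_ivl _ Icc_leb])
       (use wB in auto)
  show "(\<lambda>t. \<bar>w t\<bar>) integrable_on {0..T}"
    by (rule measurable_bounded_by_integrable_imp_integrable_real[OF borel_measurable_abs[OF w_meas] integrable_const_ivl _ Icc_leb])
       (use wB in auto)
qed


lemma V_int:
  assumes t: "t \<in> {0..T}"
  shows "integral {0..t} (\<lambda>s. \<bar>u (max 0 (s - \<tau>))\<bar>) \<le> \<tau> * \<bar>u 0\<bar> + integral {0..t} (\<lambda>s. \<bar>u s\<bar>)"
proof -
  have ua: "(\<lambda>s. \<bar>u s\<bar>) integrable_on {0..t}"
    by (rule integrable_on_subinterval[OF u_ints(2)]) (use t in auto)
  have ua0: "0 \<le> integral {0..t} (\<lambda>s. \<bar>u s\<bar>)" by (rule integral_nonneg[OF ua]) auto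
  show ?thesis
  proof (cases "t \<le> \<tau>")
    case True
    have "integral {0..t} (\<lambda>s. \<bar>u (max 0 (s - \<tau>))\<bar>) = integral {0..t} (\<lambda>s. \<bar>u 0\<bar>)"
      by (rule integral_cong) (use True in auto)
    also have "\<dots> = t * \<bar>u 0\<bar>" using t by (simp add: content_real)
    also have "\<dots> \<le> \<tau> * \<bar>u 0\<bar>" using True by (intro mult_right_mono) auto
    finally show ?thesis using ua0 by linarith
  next
    case False
    have Vc: "continuous_on {0..t} (\<lambda>s. \<bar>u (max 0 (s - \<tau>))\<bar>)"
    proof -
      have "continuous_on {0..t} (\<lambda>s. u (max 0 (s - \<tau>)))"
      proof (rule continuous_on_compose2[OF u_cont])
        show "continuous_on {0..t} (\<lambda>s. max 0 (s - \<tau>))" by (intro continuous_intros)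
        show "(\<lambda>s. max 0 (s - \<tau>)) ` {0..t} \<subseteq> {0..T}" using t tT by auto
      qed
      then show ?thesis by (intro continuous_intros)
    qed
    have Vi: "(\<lambda>s. \<bar>u (max 0 (s - \<tau>))\<bar>) integrable_on {0..t}" by (rule integrable_continuous_real[OF Vc])
    have "integral {0..t} (\<lambda>s. \<bar>u (max 0 (s - \<tau>))\<bar>)
        = integral {0..\<tau>} (\<lambda>s. \<bar>u (max 0 (s - \<tau>))\<bar>) + integral {\<tau>..t} (\<lambda>s. \<bar>u (max 0 (s - \<tau>))\<bar>)"
      using Henstock_Kurzweil_Integration.integral_combine[OF _ _ Vi, of \<tau>] tT False by simp
    moreover have "integral {0..\<tau>} (\<lambda>s. \<bar>u (max 0 (s - \<tau>))\<bar>) = \<tau> * \<bar>u 0\<bar>"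
    proof -
      have "integral {0..\<tau>} (\<lambda>s. \<bar>u (max 0 (s - \<tau>))\<bar>) = integral {0..\<tau>} (\<lambda>s. \<bar>u 0\<bar>)"
        by (rule integral_cong) auto
      then show ?thesis using tT by (simp add: content_real)
    qed
    moreover have "integral {\<tau>..t} (\<lambda>s. \<bar>u (max 0 (s - \<tau>))\<bar>) = integral {0..t - \<tau>} (\<lambda>s. \<bar>u s\<bar>)"
    proof -
      have "integral {\<tau>..t} (\<lambda>s. \<bar>u (max 0 (s - \<tau>))\<bar>) = integral {\<tau>..t} (\<lambda>s. \<bar>u (s + - \<tau>)\<bar>)"
        by (rule integral_cong) auto
      also have "\<dots> = integral {0 - - \<tau>..(t - \<tau>) - - \<tau>} (\<lambda>s. \<bar>u (s + - \<tau>)\<bar>)" by simp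
      also have "\<dots> = integral {0..t - \<tau>} (\<lambda>s. \<bar>u s\<bar>)"
        by (rule integral_shift_real_ivl[of 0 "- \<tau>" "t - \<tau>" "\<lambda>s. \<bar>u s\<bar>"])
      finally show ?thesis .
    qed
    moreover have "integral {0..t - \<tau>} (\<lambda>s. \<bar>u s\<bar>) \<le> integral {0..t} (\<lambda>s. \<bar>u s\<bar>)"
    proof (rule integral_subset_le)
      show "{0..t - \<tau>} \<subseteq> {0..t}" using tT by auto
      show "(\<lambda>s. \<bar>u s\<bar>) integrable_on {0..t - \<tau>}"
        by (rule integrable_on_subinterval[OF u_ints(2)]) (use t tT in auto)
    qed (use ua in auto)
    ultimately show ?thesis by linarith
  qed
qed


lemma key_ineq:
  assumes t: "t \<in> {0..T}"
  shows "\<bar>u t\<bar> \<le> (\<bar>u 0\<bar> * (1 + \<bar>c\<bar> * T) + \<bar>c\<bar> * T * P + integral {0..T} (\<lambda>s. \<bar>f s\<bar>))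
      + (\<bar>b\<bar> + \<bar>c\<bar>) * integral {0..t} (\<lambda>s. \<bar>u s\<bar>)"
proof -
  have sub: "{0..t} \<subseteq> {0..T}" using t by auto
  have fi: "f integrable_on {0..t}" by (rule integrable_on_subinterval[OF f_ints(3) sub])
  have fai: "(\<lambda>s. \<bar>f s\<bar>) integrable_on {0..t}" by (rule integrable_on_subinterval[OF f_ints(2) sub])
  have ui: "u integrable_on {0..t}" by (rule integrable_on_subinterval[OF u_ints(1) sub])
  have uai: "(\<lambda>s. \<bar>u s\<bar>) integrable_on {0..t}" by (rule integrable_on_subinterval[OF u_ints(2) sub])
  have wi: "w integrable_on {0..t}" by (rule integrable_on_subinterval[OF w_ints(1) sub])
  have wai: "(\<lambda>s. \<bar>w s\<bar>) integrable_on {0..t}" by (rule integrable_on_subinterval[OF w_ints(2) sub])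
  have ut: "u t = u 0 + integral {0..t} g" using ueq t by blast
  have "integral {0..t} g = integral {0..t} (\<lambda>s. (f s - b * u s) - c * w s)"
    by (rule integral_cong) (simp add: f_def)
  also have "\<dots> = integral {0..t} (\<lambda>s. f s - b * u s) - integral {0..t} (\<lambda>s. c * w s)"
    by (rule integral_diff[OF integrable_diff[OF fi integrable_on_mult_right[OF ui]] integrable_on_mult_right[OF wi]])
  also have "\<dots> = integral {0..t} f - b * integral {0..t} u - c * integral {0..t} w"
    by (simp add: integral_diff[OF fi integrable_on_mult_right[OF ui]])
  finally have gint: "integral {0..t} g = integral {0..t} f - b * integral {0..t} u - c * integral {0..t} w" .
  have e1: "\<bar>integral {0..t} f\<bar> \<le> integral {0..T} (\<lambda>s. \<bar>f s\<bar>)"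
  proof -
    have "\<bar>integral {0..t} f\<bar> \<le> integral {0..t} (\<lambda>s. \<bar>f s\<bar>)"
      using Henstock_Kurzweil_Integration.integral_norm_bound_integral[OF fi fai] by simp
    also have "\<dots> \<le> integral {0..T} (\<lambda>s. \<bar>f s\<bar>)"
      by (rule integral_subset_le[OF sub fai f_ints(2)]) auto
    finally show ?thesis .
  qed
  have e2: "\<bar>integral {0..t} u\<bar> \<le> integral {0..t} (\<lambda>s. \<bar>u s\<bar>)"
    using Henstock_Kurzweil_Integration.integral_norm_bound_integral[OF ui uai] by simp
  have e3: "\<bar>integral {0..t} w\<bar> \<le> T * P + \<tau> * \<bar>u 0\<bar> + integral {0..t} (\<lambda>s. \<bar>u s\<bar>)"
  proof -
    have Vc: "continuous_on {0..t} (\<lambda>s. \<bar>u (max 0 (s - \<tau>))\<bar>)"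
    proof -
      have "continuous_on {0..t} (\<lambda>s. u (max 0 (s - \<tau>)))"
      proof (rule continuous_on_compose2[OF u_cont])
        show "continuous_on {0..t} (\<lambda>s. max 0 (s - \<tau>))" by (intro continuous_intros)
        show "(\<lambda>s. max 0 (s - \<tau>)) ` {0..t} \<subseteq> {0..T}" using t tT by auto
      qed
      then show ?thesis by (intro continuous_intros)
    qed
    have Vi: "(\<lambda>s. P + \<bar>u (max 0 (s - \<tau>))\<bar>) integrable_on {0..t}"
      by (intro integrable_add integrable_const_ivl integrable_continuous_real[OF Vc])
    have "\<bar>integral {0..t} w\<bar> \<le> integral {0..t} (\<lambda>s. P + \<bar>u (max 0 (s - \<tau>))\<bar>)"
      using Henstock_Kurzweil_Integration.integral_norm_bound_integral[OF wi Vi] w_bound sub by auto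
    also have "\<dots> = t * P + integral {0..t} (\<lambda>s. \<bar>u (max 0 (s - \<tau>))\<bar>)"
      using integral_add[OF integrable_const_ivl integrable_continuous_real[OF Vc], of P] t
      by (simp add: content_real)
    also have "\<dots> \<le> T * P + \<tau> * \<bar>u 0\<bar> + integral {0..t} (\<lambda>s. \<bar>u s\<bar>)"
    proof -
      have "t * P \<le> T * P" using t P0 by (intro mult_right_mono) auto
      then show ?thesis using V_int[OF t] by linarith
    qed
    finally show ?thesis .
  qed
  have "\<bar>u t\<bar> \<le> \<bar>u 0\<bar> + \<bar>integral {0..t} f\<bar> + \<bar>b\<bar> * \<bar>integral {0..t} u\<bar> + \<bar>c\<bar> * \<bar>integral {0..t} w\<bar>"
    unfolding ut gint abs_mult[symmetric] by linarith
  also have "\<dots> \<le> \<bar>u 0\<bar> + integral {0..T} (\<lambda>s. \<bar>f s\<bar>) + \<bar>b\<bar> * integral {0..t} (\<lambda>s. \<bar>u s\<bar>)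
       + \<bar>c\<bar> * (T * P + \<tau> * \<bar>u 0\<bar> + integral {0..t} (\<lambda>s. \<bar>u s\<bar>))"
    using e1 mult_left_mono[OF e2, of "\<bar>b\<bar>"] mult_left_mono[OF e3, of "\<bar>c\<bar>"] by simp
  also have "\<dots> \<le> (\<bar>u 0\<bar> * (1 + \<bar>c\<bar> * T) + \<bar>c\<bar> * T * P + integral {0..T} (\<lambda>s. \<bar>f s\<bar>))
      + (\<bar>b\<bar> + \<bar>c\<bar>) * integral {0..t} (\<lambda>s. \<bar>u s\<bar>)"
  proof -
    have "\<bar>c\<bar> * (\<tau> * \<bar>u 0\<bar>) \<le> \<bar>c\<bar> * (T * \<bar>u 0\<bar>)"
      using tT by (intro mult_left_mono mult_right_mono) auto
    then show ?thesis by (simp add: algebra_simps)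
  qed
  finally show ?thesis .
qed

lemma edge_bound:
  "\<forall>t\<in>{0..T}. \<bar>u t\<bar> \<le> exp ((\<bar>b\<bar> + \<bar>c\<bar>) * T) *
      (\<bar>u 0\<bar> * (1 + \<bar>c\<bar> * T) + \<bar>c\<bar> * T * P + sqrt T * sqrt (integral {0..T} (\<lambda>s. (f s)\<^sup>2)))"
proof
  fix t assume t: "t \<in> {0..T}"
  define A where "A = \<bar>u 0\<bar> * (1 + \<bar>c\<bar> * T) + \<bar>c\<bar> * T * P + integral {0..T} (\<lambda>s. \<bar>f s\<bar>)"
  have A0: "0 \<le> A"
  proof -
    have "0 \<le> integral {0..T} (\<lambda>s. \<bar>f s\<bar>)" by (rule integral_nonneg[OF f_ints(2)]) auto
    moreover have "0 \<le> \<bar>u 0\<bar> * (1 + \<bar>c\<bar> * T)" using tT by simp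
    moreover have "0 \<le> \<bar>c\<bar> * T * P" using tT P0 by simp
    ultimately show ?thesis unfolding A_def by linarith
  qed
  have uc: "continuous_on {0..T} (\<lambda>s. \<bar>u s\<bar>)" using u_cont by (intro continuous_intros)
  have "\<bar>u t\<bar> \<le> A * exp ((\<bar>b\<bar> + \<bar>c\<bar>) * t)"
    by (rule gronwall[OF uc _ _ t, of "\<bar>b\<bar> + \<bar>c\<bar>" A]) (use key_ineq in \<open>auto simp: A_def\<close>)
  also have "\<dots> \<le> A * exp ((\<bar>b\<bar> + \<bar>c\<bar>) * T)"
    using A0 t by (intro mult_left_mono) (auto intro!: mult_left_mono)
  also have "\<dots> \<le> exp ((\<bar>b\<bar> + \<bar>c\<bar>) * T) *
      (\<bar>u 0\<bar> * (1 + \<bar>c\<bar> * T) + \<bar>c\<bar> * T * P + sqrt T * sqrt (integral {0..T} (\<lambda>s. (f s)\<^sup>2)))"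
  proof -
    have "integral {0..T} (\<lambda>s. \<bar>f s\<bar>) \<le> sqrt (T - 0) * sqrt (integral {0..T} (\<lambda>s. (f s)\<^sup>2))"
      by (rule cauchy_schwarz_int[OF f_ints(1) f_ints(2)]) (use tT in auto)
    then have "A \<le> \<bar>u 0\<bar> * (1 + \<bar>c\<bar> * T) + \<bar>c\<bar> * T * P + sqrt T * sqrt (integral {0..T} (\<lambda>s. (f s)\<^sup>2))"
      unfolding A_def by simp
    then show ?thesis by (simp add: mult.commute)
  qed
  finally show "\<bar>u t\<bar> \<le> exp ((\<bar>b\<bar> + \<bar>c\<bar>) * T) *
      (\<bar>u 0\<bar> * (1 + \<bar>c\<bar> * T) + \<bar>c\<bar> * T * P + sqrt T * sqrt (integral {0..T} (\<lambda>s. (f s)\<^sup>2)))" .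
qed


lemma edge_norm:
  assumes M: "\<forall>t\<in>{0..T}. \<bar>u t\<bar> \<le> M"
  shows "integral {0..T} (\<lambda>t. (u t)\<^sup>2 + (g t)\<^sup>2)
     \<le> 3 * integral {0..T} (\<lambda>t. (f t)\<^sup>2) + T * ((1 + 3 * b\<^sup>2) * M\<^sup>2 + 3 * c\<^sup>2 * (M + P)\<^sup>2)"
proof -
  define K where "K = (1 + 3 * b\<^sup>2) * M\<^sup>2 + 3 * c\<^sup>2 * (M + P)\<^sup>2"
  have wM: "\<forall>t\<in>{0..T}. \<bar>w t\<bar> \<le> P + M" by (rule w_bound2[OF M])
  have lhs_i: "(\<lambda>t. (u t)\<^sup>2 + (g t)\<^sup>2) integrable_on {0..T}"
  proof (rule integrable_add[OF _ g2])
    have "continuous_on {0..T} (\<lambda>t. (u t)\<^sup>2)" using u_cont by (rule continuous_on_power)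
    then show "(\<lambda>t. (u t)\<^sup>2) integrable_on {0..T}" by (rule integrable_continuous_real)
  qed
  have rhs_i: "(\<lambda>t. 3 * (f t)\<^sup>2 + K) integrable_on {0..T}"
    by (intro integrable_add integrable_on_mult_right f_ints(1) integrable_const_ivl)
  have "integral {0..T} (\<lambda>t. (u t)\<^sup>2 + (g t)\<^sup>2) \<le> integral {0..T} (\<lambda>t. 3 * (f t)\<^sup>2 + K)"
  proof (rule integral_le[OF lhs_i rhs_i])
    fix t assume t: "t \<in> {0..T}"
    have g_eq: "g t = f t - b * u t - c * w t" by (simp add: f_def)
    have u2: "(u t)\<^sup>2 \<le> M\<^sup>2"
    proof -
      have "\<bar>u t\<bar>\<^sup>2 \<le> M\<^sup>2" using M t by (intro power_mono) auto
      then show ?thesis by simp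
    qed
    have w2': "(w t)\<^sup>2 \<le> (M + P)\<^sup>2"
    proof -
      have wt: "\<bar>w t\<bar> \<le> P + M" using wM t by blast
      have "\<bar>w t\<bar>\<^sup>2 \<le> (M + P)\<^sup>2" by (rule power_mono) (use wt in auto)
      then show ?thesis by simp
    qed
    have "(g t)\<^sup>2 \<le> 3 * ((f t)\<^sup>2 + (b * u t)\<^sup>2 + (c * w t)\<^sup>2)"
      unfolding g_eq by (rule three_sq_le)
    also have "\<dots> \<le> 3 * ((f t)\<^sup>2 + b\<^sup>2 * M\<^sup>2 + c\<^sup>2 * (M + P)\<^sup>2)"
      unfolding power_mult_distrib
      using mult_left_mono[OF u2, of "b\<^sup>2"] mult_left_mono[OF w2', of "c\<^sup>2"] by simp
    moreover have "3 * ((f t)\<^sup>2 + b\<^sup>2 * M\<^sup>2 + c\<^sup>2 * (M + P)\<^sup>2) = 3 * (f t)\<^sup>2 + 3 * (b\<^sup>2 * M\<^sup>2) + 3 * (c\<^sup>2 * (M + P)\<^sup>2)"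
      by (simp add: distrib_left)
    moreover have "K = M\<^sup>2 + 3 * (b\<^sup>2 * M\<^sup>2) + 3 * (c\<^sup>2 * (M + P)\<^sup>2)"
      unfolding K_def by (simp add: distrib_right)
    ultimately show "(u t)\<^sup>2 + (g t)\<^sup>2 \<le> 3 * (f t)\<^sup>2 + K"
      using u2 by linarith
  qed
  also have "\<dots> = 3 * integral {0..T} (\<lambda>t. (f t)\<^sup>2) + T * K"
    using integral_add[OF integrable_on_mult_right[OF f_ints(1), of 3] integrable_const_ivl[of K 0 T]] tT
    by (simp add: content_real)
  finally show ?thesis unfolding K_def .
qed

end


lemma W21_eq: "W21 f g a b \<Longrightarrow> x \<in> {a..b} \<Longrightarrow> f x = f a + integral {a..x} g"
  unfolding W21_def by blast

lemma v_cont: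
  assumes W: "inW m d k T \<tau> v g" and j: "j \<in> {1..m}" and tau: "0 \<le> \<tau>"
  shows "continuous_on {0..T j} (v j)"
proof (cases "j = 1")
  case True
  have "continuous_on {-\<tau>..T 1} (v 1)" using W unfolding inW_def by (intro W21_cont) blast
  moreover have "{0..T 1} \<subseteq> {-\<tau>..T 1}" using tau by auto
  ultimately show ?thesis using True by (auto intro: continuous_on_subset)
next
  case False
  then have "j \<in> {2..m}" using j by auto
  then show ?thesis using W unfolding inW_def by (intro W21_cont) blast
qed

lemma edge_of:
  assumes W: "inW m d k T \<tau> v g" and j: "j \<in> {1..m}" and tau: "0 \<le> \<tau>" "\<tau> < T j"
    and kj: "j \<noteq> 1 \<Longrightarrow> k j \<in> {1..m} \<and> \<tau> < T (k j)"
    and P0: "0 \<le> P"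
    and Pb: "j \<noteq> 1 \<Longrightarrow> \<forall>s\<in>{0..T (k j)}. \<bar>v (k j) s\<bar> \<le> P"
  shows "edge (v j) (g j) (delayed k T \<tau> v j) (\<lambda>t. if j = 1 then 0 else v (k j) (t - \<tau> + T (k j))) (T j) \<tau> P"
proof (cases "j = 1")
  case True
  have W1: "W21 (v 1) (g 1) (-\<tau>) (T 1)" using W unfolding inW_def by blast
  have z: "\<forall>t\<in>{-\<tau>..0}. v 1 t = 0" using W unfolding inW_def by blast
  have gi: "g 1 integrable_on {-\<tau>..T 1}" and g2: "(\<lambda>t. (g 1 t)\<^sup>2) integrable_on {-\<tau>..T 1}"
    using W1 unfolding W21_def by auto
  show ?thesis unfolding True
  proof (unfold_locales)
    show "0 \<le> \<tau>" "\<tau> < T 1" using tau True by auto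
    show "g 1 integrable_on {0..T 1}" by (rule integrable_on_subinterval[OF gi]) (use tau in auto)
    show "(\<lambda>t. (g 1 t)\<^sup>2) integrable_on {0..T 1}" by (rule integrable_on_subinterval[OF g2]) (use tau in auto)
    show "\<forall>t\<in>{0..T 1}. v 1 t = v 1 0 + integral {0..t} (g 1)"
    proof
      fix t assume t: "t \<in> {0..T 1}"
      have git: "g 1 integrable_on {-\<tau>..t}" by (rule integrable_on_subinterval[OF gi]) (use t in auto)
      have "v 1 t = v 1 (-\<tau>) + integral {-\<tau>..t} (g 1)" by (rule W21_eq[OF W1]) (use t tau in auto)
      moreover have "v 1 0 = v 1 (-\<tau>) + integral {-\<tau>..0} (g 1)" by (rule W21_eq[OF W1]) (use tau True in auto)
      moreover have "integral {-\<tau>..0} (g 1) + integral {0..t} (g 1) = integral {-\<tau>..t} (g 1)"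
        by (rule Henstock_Kurzweil_Integration.integral_combine[OF _ _ git]) (use t tau in auto)
      ultimately show "v 1 t = v 1 0 + integral {0..t} (g 1)" by linarith
    qed
    show "continuous_on {0..\<tau>} (\<lambda>t. if 1 = (1::nat) then 0 else v (k 1) (t - \<tau> + T (k 1)))"
      by simp
    show "\<forall>t\<in>{0..\<tau>}. \<bar>if 1 = (1::nat) then 0 else v (k 1) (t - \<tau> + T (k 1))\<bar> \<le> P" using P0 by simp
    show "\<forall>t\<in>{0..<\<tau>}. delayed k T \<tau> v 1 t = (if 1 = (1::nat) then 0 else v (k 1) (t - \<tau> + T (k 1)))"
      using z by (auto simp: delayed_def)
    show "\<forall>t\<in>{\<tau>..T 1}. delayed k T \<tau> v 1 t = v 1 (t - \<tau>)"
      by (auto simp: delayed_def)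
  qed
next
  case False
  then have j2: "j \<in> {2..m}" using j by auto
  have Wj: "W21 (v j) (g j) 0 (T j)" using W j2 unfolding inW_def by blast
  have p: "k j \<in> {1..m}" "\<tau> < T (k j)" using kj False by auto
  have pc: "continuous_on {0..T (k j)} (v (k j))" by (rule v_cont[OF W p(1) tau(1)])
  show ?thesis
  proof (unfold_locales)
    show "0 \<le> \<tau>" "\<tau> < T j" using tau by auto
    show "g j integrable_on {0..T j}" "(\<lambda>t. (g j t)\<^sup>2) integrable_on {0..T j}"
      using Wj unfolding W21_def by auto
    show "\<forall>t\<in>{0..T j}. v j t = v j 0 + integral {0..t} (g j)"
      using Wj W21_eq by blast
    have "continuous_on {0..\<tau>} (\<lambda>t. v (k j) (t - \<tau> + T (k j)))"
    proof (rule continuous_on_compose2[OF pc])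
      show "continuous_on {0..\<tau>} (\<lambda>t. t - \<tau> + T (k j))" by (intro continuous_intros)
      show "(\<lambda>t. t - \<tau> + T (k j)) ` {0..\<tau>} \<subseteq> {0..T (k j)}" using p tau by auto
    qed
    then show "continuous_on {0..\<tau>} (\<lambda>t. if j = 1 then 0 else v (k j) (t - \<tau> + T (k j)))"
      using False by simp
    show "\<forall>t\<in>{0..\<tau>}. \<bar>if j = 1 then 0 else v (k j) (t - \<tau> + T (k j))\<bar> \<le> P"
    proof
      fix t assume t: "t \<in> {0..\<tau>}"
      then have "t - \<tau> + T (k j) \<in> {0..T (k j)}" using p tau by auto
      then show "\<bar>if j = 1 then 0 else v (k j) (t - \<tau> + T (k j))\<bar> \<le> P" using Pb False by auto
    qed
    show "\<forall>t\<in>{0..<\<tau>}. delayed k T \<tau> v j t = (if j = 1 then 0 else v (k j) (t - \<tau> + T (k j)))"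
      using False by (auto simp: delayed_def)
    show "\<forall>t\<in>{\<tau>..T j}. delayed k T \<tau> v j t = v j (t - \<tau>)"
      by (auto simp: delayed_def)
  qed
qed


theorem lemma6:
  fixes m d :: nat and k :: "nat \<Rightarrow> nat" and T b c :: "nat \<Rightarrow> real" and \<tau> :: real
  assumes tree: "rooted_tree m d k"
    and tau: "0 \<le> \<tau>" "\<forall>j\<in>{1..m}. \<tau> < T j"
  shows "\<exists>C1>0. \<forall>v g. inW m d k T \<tau> v g \<longrightarrow>
           JJ m k T \<tau> b c v g \<ge> C1 * W21T_norm2 m T v g"
proof -
  have dm: "d < m" and kr: "\<forall>j\<in>{2..m}. k j \<in> {1..d}" and reach: "\<forall>j\<in>{1..m}. \<exists>n. (k ^^ n) j = 0"
    using tree unfolding rooted_tree_def by auto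
  have kjm: "k j \<in> {1..m} \<and> \<tau> < T (k j)" if "j \<in> {1..m}" "j \<noteq> 1" for j
  proof -
    have "k j \<in> {1..d}" using kr that by auto
    then have "k j \<in> {1..m}" using dm by auto
    then show ?thesis using tau by auto
  qed
  define J where "J v g = JJ m k T \<tau> b c v g" for v g
  have FJ: "integral {0..T j} (\<lambda>t. (ell k T \<tau> b c v g j t)\<^sup>2) \<le> J v g" if "j \<in> {1..m}" for v g j
    unfolding J_def JJ_def by (rule member_le_sum) (use that integral_sq_nonneg in auto)
  have J0: "0 \<le> J v g" for v g
    unfolding J_def JJ_def by (rule sum_nonneg) (rule integral_sq_nonneg)
  have step: "\<forall>j\<in>{1..m}. (k ^^ n) j = 0 \<longrightarrow> (\<exists>K\<ge>0. \<forall>v g. inW m d k T \<tau> v g \<longrightarrow>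
      (\<forall>t\<in>{0..T j}. \<bar>v j t\<bar> \<le> K * sqrt (J v g)))" for n
  proof (induction n)
    case 0 then show ?case by auto
  next
    case (Suc n)
    show ?case
    proof (intro ballI impI)
      fix j assume j: "j \<in> {1..m}" and kn: "(k ^^ Suc n) j = 0"
      define E where "E = exp ((\<bar>b j\<bar> + \<bar>c j\<bar>) * T j)"
      have E0: "0 \<le> E" unfolding E_def by simp
      have Tj: "\<tau> < T j" using tau j by auto
      show "\<exists>K\<ge>0. \<forall>v g. inW m d k T \<tau> v g \<longrightarrow> (\<forall>t\<in>{0..T j}. \<bar>v j t\<bar> \<le> K * sqrt (J v g))"
      proof (cases "j = 1")
        case True
        show ?thesis
        proof (intro exI[of _ "E * sqrt (T j)"] conjI allI impI ballI)
          show "0 \<le> E * sqrt (T j)" using E0 Tj tau by simp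
          fix v g t assume W: "inW m d k T \<tau> v g" and t: "t \<in> {0..T j}"
          interpret Ed: edge "v j" "g j" "delayed k T \<tau> v j"
            "(\<lambda>t. if j = 1 then 0 else v (k j) (t - \<tau> + T (k j)))" "T j" \<tau> "b j" "c j" 0
            by (rule edge_of[OF W j tau(1) Tj]) (use True in auto)
          have fe: "Ed.f = ell k T \<tau> b c v g j" by (rule ext) (simp add: Ed.f_def ell_def)
          have z: "\<forall>t\<in>{-\<tau>..0}. v 1 t = 0" using W unfolding inW_def by blast
          have v0: "v j 0 = 0" using z True tau by simp
          have "\<bar>v j t\<bar> \<le> E * (\<bar>v j 0\<bar> * (1 + \<bar>c j\<bar> * T j) + \<bar>c j\<bar> * T j * 0
              + sqrt (T j) * sqrt (integral {0..T j} (\<lambda>s. (Ed.f s)\<^sup>2)))"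
            using Ed.edge_bound t unfolding E_def by blast
          then have "\<bar>v j t\<bar> \<le> E * (sqrt (T j) * sqrt (integral {0..T j} (\<lambda>s. (ell k T \<tau> b c v g j s)\<^sup>2)))"
            using v0 fe by simp
          also have "\<dots> \<le> E * (sqrt (T j) * sqrt (J v g))"
            using E0 FJ[OF j, of v g] Tj tau(1) by (intro mult_left_mono real_sqrt_le_mono) auto
          finally show "\<bar>v j t\<bar> \<le> E * sqrt (T j) * sqrt (J v g)" by (simp add: mult.assoc)
        qed
      next
        case False
        have p: "k j \<in> {1..m}" "\<tau> < T (k j)" using kjm[OF j False] by auto
        have "(k ^^ n) (k j) = 0" using kn by (simp only: funpow_Suc_right comp_apply)
        then obtain Kp where Kp0: "0 \<le> Kp" and Kp: "\<forall>v g. inW m d k T \<tau> v g \<longrightarrow>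
            (\<forall>t\<in>{0..T (k j)}. \<bar>v (k j) t\<bar> \<le> Kp * sqrt (J v g))"
          using Suc.IH p(1) by blast
        show ?thesis
        proof (intro exI[of _ "E * (Kp * (1 + \<bar>c j\<bar> * T j) + \<bar>c j\<bar> * T j * Kp + sqrt (T j))"] conjI allI impI ballI)
          show "0 \<le> E * (Kp * (1 + \<bar>c j\<bar> * T j) + \<bar>c j\<bar> * T j * Kp + sqrt (T j))"
            using E0 Tj tau Kp0 by simp
          fix v g t assume W: "inW m d k T \<tau> v g" and t: "t \<in> {0..T j}"
          define S where "S = sqrt (J v g)"
          have S0: "0 \<le> S" unfolding S_def using J0 by simp
          have pb: "\<forall>s\<in>{0..T (k j)}. \<bar>v (k j) s\<bar> \<le> Kp * S" using Kp W unfolding S_def by blast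
          interpret Ed: edge "v j" "g j" "delayed k T \<tau> v j"
            "(\<lambda>t. if j = 1 then 0 else v (k j) (t - \<tau> + T (k j)))" "T j" \<tau> "b j" "c j" "Kp * S"
            by (rule edge_of[OF W j tau(1) Tj]) (use p pb Kp0 S0 in auto)
          have fe: "Ed.f = ell k T \<tau> b c v g j" by (rule ext) (simp add: Ed.f_def ell_def)
          have "v j 0 = v (k j) (T (k j))" using W j False unfolding inW_def by auto
          moreover have "T (k j) \<in> {0..T (k j)}" using p tau(1) by auto
          ultimately have v0: "\<bar>v j 0\<bar> \<le> Kp * S" using pb by simp
          have sF: "sqrt (integral {0..T j} (\<lambda>s. (Ed.f s)\<^sup>2)) \<le> S"
            unfolding fe S_def using FJ[OF j, of v g] by simp
          have "\<bar>v j t\<bar> \<le> E * (\<bar>v j 0\<bar> * (1 + \<bar>c j\<bar> * T j) + \<bar>c j\<bar> * T j * (Kp * S)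
              + sqrt (T j) * sqrt (integral {0..T j} (\<lambda>s. (Ed.f s)\<^sup>2)))"
            using Ed.edge_bound t unfolding E_def by blast
          also have "\<dots> \<le> E * ((Kp * S) * (1 + \<bar>c j\<bar> * T j) + \<bar>c j\<bar> * T j * (Kp * S) + sqrt (T j) * S)"
          proof -
            have a: "\<bar>v j 0\<bar> * (1 + \<bar>c j\<bar> * T j) \<le> (Kp * S) * (1 + \<bar>c j\<bar> * T j)"
              using v0 Tj tau by (intro mult_right_mono) auto
            have bb: "sqrt (T j) * sqrt (integral {0..T j} (\<lambda>s. (Ed.f s)\<^sup>2)) \<le> sqrt (T j) * S"
              using sF Tj tau(1) by (intro mult_left_mono) auto
            show ?thesis using a bb E0 by (intro mult_left_mono) auto
          qed
          also have "\<dots> = E * (Kp * (1 + \<bar>c j\<bar> * T j) + \<bar>c j\<bar> * T j * Kp + sqrt (T j)) * S"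
            by (simp add: algebra_simps)
          finally show "\<bar>v j t\<bar> \<le> E * (Kp * (1 + \<bar>c j\<bar> * T j) + \<bar>c j\<bar> * T j * Kp + sqrt (T j)) * sqrt (J v g)"
            unfolding S_def .
        qed
      qed
    qed
  qed
  have "\<forall>j\<in>{1..m}. \<exists>K. 0 \<le> K \<and> (\<forall>v g. inW m d k T \<tau> v g \<longrightarrow> (\<forall>t\<in>{0..T j}. \<bar>v j t\<bar> \<le> K * sqrt (J v g)))"
  proof
    fix j assume j: "j \<in> {1..m}"
    then obtain n where "(k ^^ n) j = 0" using reach by blast
    then show "\<exists>K. 0 \<le> K \<and> (\<forall>v g. inW m d k T \<tau> v g \<longrightarrow> (\<forall>t\<in>{0..T j}. \<bar>v j t\<bar> \<le> K * sqrt (J v g)))"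
      using step[of n] j by blast
  qed
  then obtain Kf where Kf: "\<forall>j\<in>{1..m}. 0 \<le> Kf j \<and> (\<forall>v g. inW m d k T \<tau> v g \<longrightarrow> (\<forall>t\<in>{0..T j}. \<bar>v j t\<bar> \<le> Kf j * sqrt (J v g)))"
    by (metis (no_types, lifting) bchoice)
  define Q where "Q j = (1 + 3 * (b j)\<^sup>2) * (Kf j)\<^sup>2 + 3 * (c j)\<^sup>2 * (Kf j + \<bar>Kf (k j)\<bar>)\<^sup>2" for j
  define D where "D = (\<Sum>j=1..m. T j * Q j)"
  have D0: "0 \<le> D"
    unfolding D_def
  proof (rule sum_nonneg)
    fix j assume j: "j \<in> {1..m}"
    have "\<tau> < T j" using tau j by blast
    then have "0 \<le> T j" using tau(1) by linarith
    moreover have "0 \<le> Q j" unfolding Q_def by (intro add_nonneg_nonneg mult_nonneg_nonneg) auto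
    ultimately show "0 \<le> T j * Q j" by simp
  qed
  show ?thesis
  proof (intro exI[of _ "1 / (3 + D)"] conjI allI impI)
    show "0 < 1 / (3 + D)" using D0 by simp
    fix v g assume W: "inW m d k T \<tau> v g"
    define S where "S = sqrt (J v g)"
    have S0: "0 \<le> S" unfolding S_def using J0 by simp
    have S2: "S\<^sup>2 = J v g" unfolding S_def using J0 by simp
    have per: "integral {0..T j} (\<lambda>t. (v j t)\<^sup>2 + (g j t)\<^sup>2)
        \<le> 3 * integral {0..T j} (\<lambda>t. (ell k T \<tau> b c v g j t)\<^sup>2) + T j * Q j * J v g" if j: "j \<in> {1..m}" for j
    proof -
      have Tj: "\<tau> < T j" using tau j by auto
      have pb: "j \<noteq> 1 \<Longrightarrow> \<forall>s\<in>{0..T (k j)}. \<bar>v (k j) s\<bar> \<le> \<bar>Kf (k j)\<bar> * S"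
      proof -
        assume "j \<noteq> 1"
        then have p: "k j \<in> {1..m}" using kjm[OF j] by auto
        then show "\<forall>s\<in>{0..T (k j)}. \<bar>v (k j) s\<bar> \<le> \<bar>Kf (k j)\<bar> * S" using Kf W unfolding S_def by auto
      qed
      interpret Ed: edge "v j" "g j" "delayed k T \<tau> v j"
        "(\<lambda>t. if j = 1 then 0 else v (k j) (t - \<tau> + T (k j)))" "T j" \<tau> "b j" "c j" "\<bar>Kf (k j)\<bar> * S"
        by (rule edge_of[OF W j tau(1) Tj kjm[OF j] _ pb]) (use S0 in auto)
      have fe: "Ed.f = ell k T \<tau> b c v g j" by (rule ext) (simp add: Ed.f_def ell_def)
      have M: "\<forall>t\<in>{0..T j}. \<bar>v j t\<bar> \<le> Kf j * S" using Kf W j unfolding S_def by blast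
      have "integral {0..T j} (\<lambda>t. (v j t)\<^sup>2 + (g j t)\<^sup>2) \<le> 3 * integral {0..T j} (\<lambda>t. (Ed.f t)\<^sup>2)
         + T j * ((1 + 3 * (b j)\<^sup>2) * (Kf j * S)\<^sup>2 + 3 * (c j)\<^sup>2 * (Kf j * S + \<bar>Kf (k j)\<bar> * S)\<^sup>2)"
        by (rule Ed.edge_norm[OF M])
      also have "(1 + 3 * (b j)\<^sup>2) * (Kf j * S)\<^sup>2 + 3 * (c j)\<^sup>2 * (Kf j * S + \<bar>Kf (k j)\<bar> * S)\<^sup>2 = Q j * S\<^sup>2"
      proof -
        have e: "Kf j * S + \<bar>Kf (k j)\<bar> * S = (Kf j + \<bar>Kf (k j)\<bar>) * S" by (simp add: distrib_right)
        show ?thesis unfolding e Q_def power_mult_distrib by (simp add: algebra_simps)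
      qed
      finally show ?thesis unfolding fe S2 by (simp add: mult.assoc)
    qed
    have "W21T_norm2 m T v g \<le> (\<Sum>j=1..m. 3 * integral {0..T j} (\<lambda>t. (ell k T \<tau> b c v g j t)\<^sup>2) + T j * Q j * J v g)"
      unfolding W21T_norm2_def by (rule sum_mono) (rule per)
    also have "\<dots> = (3 + D) * J v g"
    proof -
      have "(\<Sum>j=1..m. 3 * integral {0..T j} (\<lambda>t. (ell k T \<tau> b c v g j t)\<^sup>2) + T j * Q j * J v g)
         = 3 * (\<Sum>j=1..m. integral {0..T j} (\<lambda>t. (ell k T \<tau> b c v g j t)\<^sup>2)) + (\<Sum>j=1..m. T j * Q j) * J v g"
        by (simp add: sum.distrib sum_distrib_left sum_distrib_right)
      also have "(\<Sum>j=1..m. integral {0..T j} (\<lambda>t. (ell k T \<tau> b c v g j t)\<^sup>2)) = J v g"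
        unfolding J_def JJ_def ..
      finally show ?thesis unfolding D_def by (simp add: algebra_simps)
    qed
    finally have N: "W21T_norm2 m T v g \<le> (3 + D) * J v g" .
    have "1 / (3 + D) * W21T_norm2 m T v g \<le> 1 / (3 + D) * ((3 + D) * J v g)"
      using N D0 by (intro mult_left_mono) auto
    also have "\<dots> = J v g" using D0 by simp
    finally show "1 / (3 + D) * W21T_norm2 m T v g \<le> JJ m k T \<tau> b c v g" unfolding J_def .
  qed
qed

end
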